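(* Let $\mathcal I\subseteq\mathcal P(\mathbb R)$ be a proper, translation-invariant $\sigma$-ideal containing all singletons and having a Borel base, and assume that $\mathcal I$ has the Steinhaus property and $\operatorname{non}(\mathcal I)<\mathfrak c$. Then there exists a set $C\subseteq\mathbb R$ which is a ${<}\mathfrak c$-covering and is completely $\mathcal I$-nonmeasurable.
   Context: $\mathfrak c=|\mathbb R|$. Borel base: every $A\in\mathcal I$ is contained in a Borel set in $\mathcal I$. $\operatorname{non}(\mathcal I)=\min\{|A|:A\subseteq\mathbb R,\ A\notin\mathcal I\}$. Steinhaus property: for all Borel $A,B\notin\mathcal I$ there is a nonempty open $U\subseteq A-B$. A set $N$ is completely $\mathcal I$-nonmeasurable if for every Borel $A\notin\mathcal I$, both $A\cap N\notin\mathcal I$ and $A\setminus N\notin\mathcal I$. A set $C$ is a ${<}\mathfrak c$-covering if for every $B\subseteq\mathbb R$ with $|B|<\mathfrak c$ there is $x\in\mathbb R$ with $B+x\subseteq C$. *)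

theory Defs
  imports "HOL-Analysis.Analysis" "HOL-Library.Equipollence"
begin

definition sigma_ideal :: "real set set \<Rightarrow> bool" where
  "sigma_ideal I \<longleftrightarrow> {} \<in> I \<and>
     (\<forall>A B. A \<in> I \<and> B \<subseteq> A \<longrightarrow> B \<in> I) \<and>
     (\<forall>F :: nat \<Rightarrow> real set. (\<forall>n. F n \<in> I) \<longrightarrow> (\<Union>n. F n) \<in> I)"

definition proper_ideal :: "real set set \<Rightarrow> bool" where
  "proper_ideal I \<longleftrightarrow> UNIV \<notin> I"

definition translation_invariant :: "real set set \<Rightarrow> bool" where
  "translation_invariant I \<longleftrightarrow> (\<forall>A \<in> I. \<forall>x::real. (\<lambda>a. a + x) ` A \<in> I)"

definition contains_singletons :: "real set set \<Rightarrow> bool" where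
  "contains_singletons I \<longleftrightarrow> (\<forall>x::real. {x} \<in> I)"

definition borel_base :: "real set set \<Rightarrow> bool" where
  "borel_base I \<longleftrightarrow> (\<forall>A \<in> I. \<exists>B \<in> sets borel. A \<subseteq> B \<and> B \<in> I)"

definition non_lt_continuum :: "real set set \<Rightarrow> bool" where
  "non_lt_continuum I \<longleftrightarrow> (\<exists>A :: real set. A \<notin> I \<and> A \<prec> (UNIV :: real set))"

definition steinhaus :: "real set set \<Rightarrow> bool" where
  "steinhaus I \<longleftrightarrow> (\<forall>A \<in> sets borel. \<forall>B \<in> sets borel. A \<notin> I \<and> B \<notin> I \<longrightarrow>
     (\<exists>U. open U \<and> U \<noteq> {} \<and> U \<subseteq> {a - b | a b. a \<in> A \<and> b \<in> B}))"

definition completely_nonmeasurable :: "real set set \<Rightarrow> real set \<Rightarrow> bool" where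
  "completely_nonmeasurable I N \<longleftrightarrow>
     (\<forall>A \<in> sets borel. A \<notin> I \<longrightarrow> A \<inter> N \<notin> I \<and> A - N \<notin> I)"

definition lt_c_covering :: "real set \<Rightarrow> bool" where
  "lt_c_covering C \<longleftrightarrow> (\<forall>B :: real set. B \<prec> (UNIV :: real set) \<longrightarrow>
     (\<exists>x. (\<lambda>b. b + x) ` B \<subseteq> C))"

end

theory Submission
  imports Defs
begin

unbundle cardinal_syntax

lemma lepoll_ordLeq: "A \<lesssim> B \<longleftrightarrow> |A| \<le>o |B|"
  unfolding lepoll_def by (rule card_of_ordLeq)

lemma prod_small_aux:
  assumes "A \<lesssim> B" "B \<prec> (UNIV::real set)"
  shows "A \<times> B \<prec> (UNIV::real set)"
proof (cases "finite B")
  case True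
  have "finite A" using assms(1) True inj_on_finite unfolding lepoll_def by blast
  then have "finite (A \<times> B)" using True by simp
  then show ?thesis by (rule finite_lesspoll_infinite[OF infinite_UNIV_char_0])
next
  case False
  have 1: "A \<times> B \<lesssim> B \<times> B" by (rule times_lepoll_mono[OF assms(1) lepoll_refl])
  have "|B \<times> B| =o |B|" by (rule card_of_Times_same_infinite[OF False])
  then have "B \<times> B \<approx> B" by (simp add: eqpoll_iff_card_of_ordIso)
  then have "A \<times> B \<lesssim> B" by (rule lepoll_trans[OF 1 eqpoll_imp_lepoll])
  then show ?thesis by (rule lesspoll_trans1[OF _ assms(2)])
qed

lemma prod_small:
  assumes "A \<prec> (UNIV::real set)" "B \<prec> (UNIV::real set)"
  shows "A \<times> B \<prec> (UNIV::real set)"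
proof -
  have "|A| \<le>o |B| \<or> |B| \<le>o |A|"
    by (rule ordLeq_total[OF card_of_Well_order card_of_Well_order])
  then show ?thesis
  proof
    assume "|A| \<le>o |B|"
    then have "A \<lesssim> B" by (simp add: lepoll_ordLeq)
    then show ?thesis by (rule prod_small_aux[OF _ assms(2)])
  next
    assume "|B| \<le>o |A|"
    then have "B \<lesssim> A" by (simp add: lepoll_ordLeq)
    then have "B \<times> A \<prec> (UNIV::real set)" by (rule prod_small_aux[OF _ assms(1)])
    then show ?thesis by (rule eq_lesspoll_trans[OF times_commute_eqpoll])
  qed
qed

lemma image_small:
  assumes "A \<prec> (UNIV::real set)" shows "f ` A \<prec> (UNIV::real set)"
  by (rule lesspoll_trans1[OF image_lepoll assms])

lemma small_ne_UNIV: "(S::real set) \<prec> (UNIV::real set) \<Longrightarrow> S \<noteq> UNIV"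
  unfolding lesspoll_def by (auto simp: eqpoll_refl)

lemma rats_small: "(\<rat>::real set) \<prec> (UNIV::real set)"
proof -
  have "\<not> (\<rat>::real set) \<approx> (UNIV::real set)"
  proof
    assume "(\<rat>::real set) \<approx> (UNIV::real set)"
    then have "countable (UNIV::real set)" using countable_eqpoll[OF countable_rat] eqpoll_sym by blast
    then show False using uncountable_UNIV_real by simp
  qed
  then show ?thesis unfolding lesspoll_def by (simp add: subset_imp_lepoll)
qed

lemma sigma_UN_nat:
  fixes F :: "nat \<Rightarrow> real set"
  assumes h: "sigma_ideal I" and n: "\<And>n. F n \<in> I"
  shows "(\<Union>n. F n) \<in> I"
proof -
  from h have "\<forall>F::nat \<Rightarrow> real set. (\<forall>n. F n \<in> I) \<longrightarrow> (\<Union>n. F n) \<in> I"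
    unfolding sigma_ideal_def by (elim conjE)
  then have "(\<forall>n. F n \<in> I) \<longrightarrow> (\<Union>n. F n) \<in> I" by (rule spec)
  moreover have "\<forall>n. F n \<in> I" using n by (rule allI)
  ultimately show ?thesis by (rule mp)
qed

lemma sigma_sub:
  assumes h: "sigma_ideal I" and a: "A \<in> I" and b: "B \<subseteq> A" shows "B \<in> I"
proof -
  from h have "\<forall>A B. A \<in> I \<and> B \<subseteq> A \<longrightarrow> B \<in> I"
    unfolding sigma_ideal_def by (elim conjE)
  then have "A \<in> I \<and> B \<subseteq> A \<longrightarrow> B \<in> I" by blast
  then show ?thesis using a b by blast
qed

lemma sigma_empty: "sigma_ideal I \<Longrightarrow> {} \<in> I"
  unfolding sigma_ideal_def by (elim conjE)

lemma sigma_Un: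
  assumes "sigma_ideal I" "A \<in> I" "B \<in> I" shows "A \<union> B \<in> I"
proof -
  define F where "F = (\<lambda>n::nat. if n = 0 then A else B)"
  have "(\<Union>n. F n) \<in> I" by (rule sigma_UN_nat[OF assms(1)]) (simp add: F_def assms(2,3))
  moreover have "A \<union> B \<subseteq> (\<Union>n. F n)"
  proof -
    have "F 0 \<subseteq> (\<Union>n. F n)" by (rule UN_upper) simp
    moreover have "F 1 \<subseteq> (\<Union>n. F n)" by (rule UN_upper) simp
    moreover have "F 0 = A" "F 1 = B" unfolding F_def by simp_all
    ultimately show ?thesis by simp
  qed
  ultimately show ?thesis by (rule sigma_sub[OF assms(1)])
qed

lemma sigma_countable_UN:
  assumes "sigma_ideal I" "countable S" "\<And>s. s \<in> S \<Longrightarrow> f s \<in> I"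
  shows "(\<Union>s\<in>S. f s) \<in> I"
proof (cases "S = {}")
  case True then show ?thesis using sigma_empty[OF assms(1)] by simp
next
  case False
  have mem: "(\<Union>n. f (from_nat_into S n)) \<in> I"
    by (rule sigma_UN_nat[OF assms(1)]) (rule assms(3), rule from_nat_into[OF False])
  have "(\<Union>s\<in>S. f s) = (\<Union>s\<in>range (from_nat_into S). f s)"
    using range_from_nat_into[OF False assms(2)] by simp
  also have "\<dots> = (\<Union>n. f (from_nat_into S n))"
    by (simp only: image_image)
  finally have eq: "(\<Union>s\<in>S. f s) = (\<Union>n. f (from_nat_into S n))" .
  show ?thesis unfolding eq by (rule mem)
qed

lemma transl_borel:
  assumes "B \<in> sets borel" shows "(\<lambda>b. b + (q::real)) ` B \<in> sets borel"
proof -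
  have eq: "(\<lambda>b. b + q) ` B = (\<lambda>x. x - q) -` B"
  proof (intro set_eqI iffI)
    fix x assume "x \<in> (\<lambda>b. b + q) ` B"
    then obtain b where "b \<in> B" "x = b + q" by blast
    then show "x \<in> (\<lambda>x. x - q) -` B" by simp
  next
    fix x assume "x \<in> (\<lambda>x. x - q) -` B"
    then have "x - q \<in> B" by simp
    then have "(\<lambda>b. b + q) (x - q) \<in> (\<lambda>b. b + q) ` B" by (rule imageI)
    then show "x \<in> (\<lambda>b. b + q) ` B" by simp
  qed
  have m: "(\<lambda>x::real. x - q) \<in> borel_measurable borel" by measurable
  show ?thesis unfolding eq by (rule measurable_sets_borel[OF m assms])
qed

lemma transl_notin:
  assumes "translation_invariant I" "A \<notin> I" shows "(\<lambda>a. a + x) ` A \<notin> I"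
proof
  assume "(\<lambda>a. a + x) ` A \<in> I"
  then have "(\<lambda>a. a + (-x)) ` ((\<lambda>a. a + x) ` A) \<in> I"
    using assms(1) unfolding translation_invariant_def by blast
  moreover have "(\<lambda>a. a + (-x)) ` ((\<lambda>a. a + x) ` A) = A" by (simp add: image_image)
  ultimately show False using assms(2) by simp
qed

lemma coI:
  assumes "steinhaus I" "B \<in> sets borel" "B \<notin> I"
  shows "- (\<Union>q\<in>\<rat>. (\<lambda>b. b + q) ` B) \<in> I"
proof (rule ccontr)
  define E where "E = - (\<Union>q\<in>\<rat>. (\<lambda>b. b + q) ` B)"
  assume "- (\<Union>q\<in>\<rat>. (\<lambda>b. b + q) ` B) \<notin> I"
  then have nE: "E \<notin> I" unfolding E_def .
  have "(\<Union>q\<in>\<rat>. (\<lambda>b. b + q) ` B) \<in> sets borel"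
    by (rule sets.countable_UN''[OF countable_rat transl_borel[OF assms(2)]])
  then have Eb: "E \<in> sets borel" unfolding E_def by (rule borel_comp)
  have st: "\<forall>A\<in>sets borel. \<forall>B\<in>sets borel. A \<notin> I \<and> B \<notin> I \<longrightarrow>
     (\<exists>U. open U \<and> U \<noteq> {} \<and> U \<subseteq> {a - b | a b. a \<in> A \<and> b \<in> B})"
    using assms(1) unfolding steinhaus_def .
  have "E \<notin> I \<and> B \<notin> I \<longrightarrow> (\<exists>U. open U \<and> U \<noteq> {} \<and> U \<subseteq> {a - b | a b. a \<in> E \<and> b \<in> B})"
    using bspec[OF bspec[OF st Eb] assms(2)] .
  then have "\<exists>U. open U \<and> U \<noteq> {} \<and> U \<subseteq> {a - b | a b. a \<in> E \<and> b \<in> B}"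
    using nE assms(3) by simp
  then obtain U where U: "open U" "U \<noteq> {}" "U \<subseteq> {a - b | a b. a \<in> E \<and> b \<in> B}"
    by blast
  obtain u where "u \<in> U" using U(2) by blast
  then obtain e where "e > 0" "ball u e \<subseteq> U" using U(1) open_contains_ball by blast
  obtain r where r: "r \<in> \<rat>" "u < r" "r < u + e" using Rats_dense_in_real[of u "u+e"] \<open>e>0\<close> by auto
  then have "r \<in> ball u e" by (simp add: dist_real_def)
  then have "r \<in> {a - b | a b. a \<in> E \<and> b \<in> B}" using \<open>ball u e \<subseteq> U\<close> U(3) by blast
  then obtain a b where ab: "r = a - b" "a \<in> E" "b \<in> B" by blast
  then have "(\<lambda>b. b + r) b \<in> (\<lambda>b. b + r) ` B" by (intro imageI)
  then have "a \<in> (\<lambda>b. b + r) ` B" using ab(1) by simp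
  then have "a \<in> (\<Union>q\<in>\<rat>. (\<lambda>b. b + q) ` B)" using r(1) by (rule UN_I[rotated])
  then show False using ab(2) unfolding E_def by simp
qed

theorem mainTheorem8:
  fixes I :: "real set set"
  assumes "sigma_ideal I" and "proper_ideal I" and "translation_invariant I"
    and "contains_singletons I" and "borel_base I"
    and "steinhaus I" and "non_lt_continuum I"
  shows "\<exists>C :: real set. lt_c_covering C \<and> completely_nonmeasurable I C"
proof -
  note sI = assms(1) and ti = assms(3)
  obtain T where T: "T \<notin> I" "T \<prec> (UNIV::real set)"
    using assms(7) unfolding non_lt_continuum_def by blast
  define X where "X = (\<lambda>(t,q). t + q) ` (T \<times> \<rat>)"
  have Xsmall: "X \<prec> (UNIV::real set)"
    unfolding X_def by (rule image_small[OF prod_small[OF T(2) rats_small]])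
  have Xq: "x + q \<in> X" if xX: "x \<in> X" and qQ: "q \<in> \<rat>" for x q
  proof -
    obtain p where p: "p \<in> T \<times> \<rat>" "x = (\<lambda>(t,q). t + q) p" using xX unfolding X_def by blast
    obtain t r where "t \<in> T" "r \<in> \<rat>" "x = t + r" using p by (cases p) auto
    then have "x + q = t + (r + q)" "r + q \<in> \<rat>" using qQ by auto
    moreover have "(t, r + q) \<in> T \<times> \<rat>" using \<open>t \<in> T\<close> \<open>r + q \<in> \<rat>\<close> by simp
    then have "(\<lambda>(t,q). t + q) (t, r + q) \<in> X" unfolding X_def by (rule imageI)
    ultimately show ?thesis by (simp add: add.assoc)
  qed
  have TX: "t - q \<in> X" if "t \<in> T" "q \<in> \<rat>" for t q
  proof -
    have "(t, - q) \<in> T \<times> \<rat>" using that by simp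
    then have "(\<lambda>(t,q). t + q) (t, - q) \<in> X" unfolding X_def by (rule imageI)
    then show ?thesis by simp
  qed
  define C where "C = - X"
  have cov: "lt_c_covering C"
    unfolding lt_c_covering_def
  proof (intro allI impI)
    fix B :: "real set" assume B: "B \<prec> (UNIV::real set)"
    have "(\<lambda>(a,b). a - b) ` (X \<times> B) \<prec> (UNIV::real set)"
      by (rule image_small[OF prod_small[OF Xsmall B]])
    then have "(\<lambda>(a,b). a - b) ` (X \<times> B) \<noteq> UNIV"
      by (rule small_ne_UNIV)
    then obtain x where x: "x \<notin> (\<lambda>(a,b). a - b) ` (X \<times> B)"
      by blast
    have "(\<lambda>b. b + x) ` B \<subseteq> C"
    proof
      fix y assume "y \<in> (\<lambda>b. b + x) ` B"
      then obtain b where b: "b \<in> B" "y = b + x" by auto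
      show "y \<in> C"
      proof (rule ccontr)
        assume "y \<notin> C"
        then have "y \<in> X" unfolding C_def by simp
        then have "x \<in> (\<lambda>(a,b). a - b) ` (X \<times> B)" using b by (force intro!: image_eqI[where x="(y,b)"])
        then show False using x by simp
      qed
    qed
    then show "\<exists>x. (\<lambda>b. b + x) ` B \<subseteq> C" by blast
  qed
  have cnm: "completely_nonmeasurable I C"
    unfolding completely_nonmeasurable_def
  proof (intro ballI impI conjI)
    fix B assume Bb: "B \<in> sets borel" and BI: "B \<notin> I"
    show "B \<inter> C \<notin> I"
    proof
      assume h: "B \<inter> C \<in> I"
      then obtain H where H: "H \<in> sets borel" "B \<inter> C \<subseteq> H" "H \<in> I"
        using assms(5) unfolding borel_base_def by blast
      define B' where "B' = B - H"
      have B'b: "B' \<in> sets borel" using Bb H unfolding B'_def by auto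
      have "B' \<notin> I"
      proof
        assume "B' \<in> I"
        then have "B' \<union> H \<in> I" using sigma_Un[OF sI _ H(3)] by blast
        moreover have "B \<subseteq> B' \<union> H" unfolding B'_def by blast
        ultimately have "B \<in> I" by (rule sigma_sub[OF sI])
        then show False using BI by simp
      qed
      have B'X: "B' \<subseteq> X" using H unfolding B'_def C_def by auto
      have "(\<Union>q\<in>\<rat>. (\<lambda>b. b + q) ` B') \<subseteq> X"
      proof
        fix z assume "z \<in> (\<Union>q\<in>\<rat>. (\<lambda>b. b + q) ` B')"
        then obtain q b where "q \<in> \<rat>" "b \<in> B'" "z = b + q" by blast
        then show "z \<in> X" using B'X Xq by blast
      qed
      then have "- X \<subseteq> - (\<Union>q\<in>\<rat>. (\<lambda>b. b + q) ` B')" by blast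
      then have cX: "- X \<in> I" by (rule sigma_sub[OF sI coI[OF assms(6) B'b \<open>B' \<notin> I\<close>]])
      have "y \<in> (\<lambda>(a,b). a - b) ` (X \<times> X)" for y
      proof (rule ccontr)
        assume ny: "y \<notin> (\<lambda>(a,b). a - b) ` (X \<times> X)"
        have "(\<lambda>a. a + y) ` (- X) \<in> I" using cX ti unfolding translation_invariant_def by blast
        then have "- X \<union> (\<lambda>a. a + y) ` (- X) \<in> I" by (rule sigma_Un[OF sI cX])
        moreover have "- X \<union> (\<lambda>a. a + y) ` (- X) = UNIV"
        proof -
          have "z \<in> - X \<or> z \<in> (\<lambda>a. a + y) ` (- X)" for z
          proof (cases "z \<in> X")
            case True
            have "z - y \<notin> X"
            proof
              assume "z - y \<in> X"
              then have "(z, z - y) \<in> X \<times> X" using True by simp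
              then have "(\<lambda>(a,b). a - b) (z, z - y) \<in> (\<lambda>(a,b). a - b) ` (X \<times> X)" by (rule imageI)
              then have "y \<in> (\<lambda>(a,b). a - b) ` (X \<times> X)" by simp
              then show False using ny by simp
            qed
            then have "z - y \<in> - X" by simp
            then have "(\<lambda>a. a + y) (z - y) \<in> (\<lambda>a. a + y) ` (- X)" by (rule imageI)
            then show ?thesis by simp
          qed simp
          then show ?thesis by blast
        qed
        ultimately show False using assms(2) unfolding proper_ideal_def by simp
      qed
      moreover have "(\<lambda>(a,b). a - b) ` (X \<times> X) \<prec> (UNIV::real set)"
        by (rule image_small[OF prod_small[OF Xsmall Xsmall]])
      then have "(\<lambda>(a,b). a - b) ` (X \<times> X) \<noteq> UNIV"
        by (rule small_ne_UNIV)
      ultimately show False by blast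
    qed
    show "B - C \<notin> I"
    proof
      assume h: "B - C \<in> I"
      have "T \<subseteq> (- (\<Union>q\<in>\<rat>. (\<lambda>b. b + q) ` B)) \<union> (\<Union>q\<in>\<rat>. (\<lambda>a. a + q) ` (B - C))"
      proof
        fix t assume t: "t \<in> T"
        show "t \<in> (- (\<Union>q\<in>\<rat>. (\<lambda>b. b + q) ` B)) \<union> (\<Union>q\<in>\<rat>. (\<lambda>a. a + q) ` (B - C))"
        proof (cases "t \<in> (\<Union>q\<in>\<rat>. (\<lambda>b. b + q) ` B)")
          case True
          then obtain q b where qb: "q \<in> \<rat>" "b \<in> B" "t = b + q" by auto
          then have "b = t - q" by simp
          then have "b \<in> X" using TX t qb(1) by simp
          then have "b \<in> B - C" using qb(2) unfolding C_def by simp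
          then show ?thesis using qb by blast
        qed simp
      qed
      moreover have "(\<Union>q\<in>\<rat>. (\<lambda>a. a + q) ` (B - C)) \<in> I"
        using h ti countable_rat unfolding translation_invariant_def
        by (intro sigma_countable_UN[OF sI]) auto
      moreover have "(- (\<Union>q\<in>\<rat>. (\<lambda>b. b + q) ` B)) \<union> (\<Union>q\<in>\<rat>. (\<lambda>a. a + q) ` (B - C)) \<in> I"
        using coI[OF assms(6) Bb BI] sigma_Un[OF sI] calculation(2) by metis
      ultimately have "T \<in> I" using sigma_sub[OF sI] by metis
      then show False using T by simp
    qed
  qed
  show ?thesis using cov cnm by blast
qed

end
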